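(* For real $z\ge 10$ let $$c_1(z)=\sum_{\substack{n_1,n_2,n_3,n_4\le z\\ \sqrt{n_1}+\sqrt{n_2}+\sqrt{n_3}=\sqrt{n_4}}}\frac{d(n_1)d(n_2)d(n_3)d(n_4)}{(n_1n_2n_3)^{3/4}n_4^{1/4}},$$ the sum being over positive integers. Then $c_1(z)\ll 1$ uniformly for $z\ge 10$.
   Context: $d(n)$ denotes the number of positive divisors of $n$. $f\ll g$ means $|f|\le Cg$ for some absolute positive constant $C$. *)

theory Defs
  imports "HOL-Analysis.Analysis"
begin

definition ndiv :: "nat \<Rightarrow> nat" where
  "ndiv n = card {k. k dvd n \<and> k > 0}"

definition c1 :: "real \<Rightarrow> real" where
  "c1 z = (\<Sum>(n1, n2, n3, n4) \<in>
      {(n1, n2, n3, n4). n1 \<in> {1..nat \<lfloor>z\<rfloor>} \<and> n2 \<in> {1..nat \<lfloor>z\<rfloor>} \<and>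
          n3 \<in> {1..nat \<lfloor>z\<rfloor>} \<and> n4 \<in> {1..nat \<lfloor>z\<rfloor>} \<and>
          sqrt (real n1) + sqrt (real n2) + sqrt (real n3) = sqrt (real n4)}.
      real (ndiv n1 * ndiv n2 * ndiv n3 * ndiv n4) /
        ((real (n1 * n2 * n3)) powr (3/4) * (real n4) powr (1/4)))"

end

theory Submission
  imports Defs "HOL-Computational_Algebra.Squarefree" "HOL-Computational_Algebra.Nth_Powers" "HOL-Computational_Algebra.Primes"
begin


lemma ndiv_finite: "n > 0 \<Longrightarrow> finite {k. k dvd n \<and> k > (0::nat)}"
  by (rule finite_subset[of _ "{..n}"]) (auto dest: dvd_imp_le)

lemma ndiv_mult_le:
  fixes a b :: nat assumes "a > 0" "b > 0"
  shows "ndiv (a*b) \<le> ndiv a * ndiv b"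
proof -
  let ?A = "{k. k dvd a \<and> k > 0}" and ?B = "{k. k dvd b \<and> k > 0}"
  have "{k. k dvd a*b \<and> k > 0} \<subseteq> (\<lambda>(x,y). x*y) ` (?A \<times> ?B)"
  proof
    fix k assume "k \<in> {k. k dvd a*b \<and> k > 0}"
    then have k: "k dvd a*b" "k > 0" by auto
    from division_decomp[OF k(1)] obtain x y where "k = x*y" "x dvd a" "y dvd b" by blast
    with k(2) show "k \<in> (\<lambda>(x,y). x*y) ` (?A \<times> ?B)" by (auto intro!: image_eqI[of _ _ "(x,y)"])
  qed
  then have "card {k. k dvd a*b \<and> k > 0} \<le> card ((\<lambda>(x,y). x*y) ` (?A \<times> ?B))"
    using assms by (intro card_mono) (auto intro: ndiv_finite)
  also have "\<dots> \<le> card (?A \<times> ?B)" using assms by (intro card_image_le) (auto intro: ndiv_finite)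
  also have "\<dots> = ndiv a * ndiv b" by (simp add: ndiv_def card_cartesian_product)
  finally show ?thesis by (simp add: ndiv_def)
qed

lemma ndiv_prime_pow: assumes "prime (p::nat)" shows "ndiv (p^e) \<le> e + 1"
proof -
  have "{k. k dvd p^e \<and> k > 0} \<subseteq> (\<lambda>i. p^i) ` {0..e}"
    using divides_primepow_nat[OF assms] by auto
  then have "ndiv (p^e) \<le> card ((\<lambda>i. p^i) ` {0..e})" unfolding ndiv_def by (intro card_mono) auto
  also have "\<dots> \<le> card {0..e}" by (rule card_image_le) auto
  finally show ?thesis by simp
qed

lemma small_bound: "real (e+1) \<le> 6 * 2 powr (real e / 6)"
proof -
  have h1: "e + 1 \<le> 6 * (e div 6 + 1)" by presburger
  have h2: "e div 6 + 1 \<le> 2 ^ (e div 6)" using less_exp[of "e div 6"] by (simp add: Suc_le_eq)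
  have "e + 1 \<le> 6 * 2 ^ (e div 6)" using h1 h2 by linarith
  then have "real (e+1) \<le> real (6 * 2 ^ (e div 6))" by (simp only: of_nat_le_iff)
  then have "real (e+1) \<le> 6 * 2 ^ (e div 6)" by simp
  also have "(2::real) ^ (e div 6) = 2 powr (real (e div 6))" by (simp add: powr_realpow)
  also have "\<dots> \<le> 2 powr (real e / 6)"
    by (intro powr_mono) (auto simp: real_of_nat_div)
  finally show ?thesis by simp
qed

lemma big_bound: assumes "(p::nat) \<ge> 64" shows "real (e+1) \<le> real p powr (real e / 6)"
proof -
  have "real (e+1) \<le> 2 ^ e" using less_exp[of e] by (metis Suc_eq_plus1 Suc_leI of_nat_le_iff of_nat_numeral of_nat_power)
  also have "(2::real) ^ e = (64 powr (1/6)) ^ e"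
  proof -
    have "(64::real) powr (1/6) = (2 powr 6) powr (1/6)" by simp
    also have "\<dots> = 2" by (simp add: powr_powr)
    finally show ?thesis by simp
  qed
  also have "\<dots> \<le> (real p powr (1/6)) ^ e" using assms by (intro power_mono powr_mono2) auto
  also have "\<dots> = real p powr (real e / 6)" using assms
    by (simp add: powr_realpow[symmetric] powr_powr)
  finally show ?thesis .
qed




definition Qs :: "nat \<Rightarrow> nat" where "Qs n = card {p. prime p \<and> p < 64 \<and> p dvd n}"

lemma ndiv_1: "ndiv 1 = 1"
  unfolding ndiv_def by (simp add: Collect_conv_if) 

lemma ndiv_bound_aux: "n > 0 \<Longrightarrow> real (ndiv n) \<le> 6 ^ Qs n * real n powr (1/6)"
proof (induction n rule: less_induct)
  case (less n)
  show ?case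
  proof (cases "n = 1")
    case True
    have "ndiv 1 = 1" by (rule ndiv_1)
    then show ?thesis using True by simp
  next
    case False
    obtain p where p: "prime p" "p dvd n" using prime_factor_nat[OF False] by blast
    have np: "n \<noteq> 0" "\<not> is_unit p" using less.prems p by auto
    obtain m where m: "n = p ^ multiplicity p n * m" "\<not> p dvd m"
      using multiplicity_decompose'[OF np] by blast
    define e where "e = multiplicity p n"
    have me: "n = p^e * m" using m e_def by simp
    have e1: "e \<ge> 1"
    proof (rule ccontr)
      assume "\<not> e \<ge> 1" then have "e = 0" by simp
      with me m p show False by simp
    qed
    have mpos: "m > 0" using me less.prems by (cases "m = 0") auto
    have p2: "p \<ge> 2" using p prime_ge_2_nat by blast
    have "p^1 \<le> p^e" using e1 p2 by (intro power_increasing) auto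
    then have "p^e \<ge> 2" using p2 by simp
    then have "1 * m < p^e * m" using mpos by (intro mult_strict_right_mono) auto
    then have mlt: "m < n" using me by simp
    have IH: "real (ndiv m) \<le> 6 ^ Qs m * real m powr (1/6)" using less.IH[OF mlt mpos] .
    have "ndiv n \<le> ndiv (p^e) * ndiv m" using me ndiv_mult_le[of "p^e" m] mpos p2 by simp
    also have "\<dots> \<le> (e+1) * ndiv m" using ndiv_prime_pow[OF p(1)] by (intro mult_right_mono) auto
    finally have dn0: "ndiv n \<le> (e+1) * ndiv m" .
    have dn: "real (ndiv n) \<le> real (e+1) * real (ndiv m)" using of_nat_mono[OF dn0, where 'a=real] by (simp add: algebra_simps)
    have sub: "{q. prime q \<and> q < 64 \<and> q dvd m} \<subseteq> {q. prime q \<and> q < 64 \<and> q dvd n} - {p}"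
    proof
      fix q assume "q \<in> {q. prime q \<and> q < 64 \<and> q dvd m}"
      then have q: "prime q" "q < 64" "q dvd m" by auto
      have "q dvd n" unfolding me using q(3) by (rule dvd_mult)
      moreover have "q \<noteq> p" using q(3) m(2) by auto
      ultimately show "q \<in> {q. prime q \<and> q < 64 \<and> q dvd n} - {p}" using q by auto
    qed
    have fin: "finite {q. prime q \<and> q < 64 \<and> q dvd n}" by (rule finite_subset[of _ "{..<64}"]) auto
    have pw: "real n powr (1/6) = real p powr (real e / 6) * real m powr (1/6)"
    proof -
      have "real n = real p ^ e * real m" using me by simp
      also have "real p ^ e = real p powr real e" using p2 by (simp add: powr_realpow)
      finally have "real n powr (1/6) = (real p powr real e) powr (1/6) * real m powr (1/6)"
        by (simp add: powr_mult)
      also have "(real p powr real e) powr (1/6) = real p powr (real e / 6)" by (simp add: powr_powr)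
      finally show ?thesis .
    qed
    show ?thesis
    proof (cases "p < 64")
      case True
      have "Qs m \<le> card ({q. prime q \<and> q < 64 \<and> q dvd n} - {p})"
        unfolding Qs_def using sub fin by (intro card_mono) auto
      also have "\<dots> = Qs n - 1" unfolding Qs_def using fin True p by (subst card_Diff_singleton) auto
      moreover have "Qs n > 0" unfolding Qs_def using fin True p by (auto simp: card_gt_0_iff)
      ultimately have Q: "Qs m + 1 \<le> Qs n" by linarith
      have "(2::real) powr (real e / 6) \<le> real p powr (real e / 6)"
        using p2 by (intro powr_mono2) auto
      then have eb: "real (e+1) \<le> 6 * real p powr (real e / 6)"
        using small_bound[of e] by linarith
      have "real (ndiv n) \<le> (6 * real p powr (real e / 6)) * (6 ^ Qs m * real m powr (1/6))"
        using dn by (rule order_trans) (intro mult_mono eb IH, auto)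
      also have "\<dots> = 6 ^ (Qs m + 1) * real n powr (1/6)" using pw by simp
      also have "\<dots> \<le> 6 ^ Qs n * real n powr (1/6)"
        using Q by (intro mult_right_mono power_increasing) auto
      finally show ?thesis .
    next
      case False
      have "Qs m \<le> Qs n" unfolding Qs_def using sub fin by (intro card_mono) auto
      have "real (e+1) \<le> real p powr (real e / 6)" using big_bound False by simp
      then have "real (ndiv n) \<le> real p powr (real e / 6) * (6 ^ Qs m * real m powr (1/6))"
        using dn by (intro order_trans[OF dn] mult_mono IH) auto
      also have "\<dots> = 6 ^ Qs m * real n powr (1/6)" using pw by simp
      also have "\<dots> \<le> 6 ^ Qs n * real n powr (1/6)"
        using \<open>Qs m \<le> Qs n\<close> by (intro mult_right_mono power_increasing) auto
      finally show ?thesis .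
    qed
  qed
qed

lemma ndiv_bound: "n > 0 \<Longrightarrow> real (ndiv n) \<le> 6 ^ 64 * real n powr (1/6)"
proof -
  assume n: "n > 0"
  have "Qs n \<le> card {..<(64::nat)}" unfolding Qs_def by (intro card_mono) auto
  then have "(6::real) ^ Qs n \<le> 6 ^ 64" by (intro power_increasing) auto
  then have "(6::real) ^ Qs n * real n powr (1/6) \<le> 6 ^ 64 * real n powr (1/6)"
    by (intro mult_right_mono) auto
  then show ?thesis using ndiv_bound_aux[OF n] by linarith
qed




lemma sqrt_sum_square:
  fixes a b c d :: nat
  assumes pos: "a > 0" "b > 0" "c > 0" "d > 0"
    and eq: "sqrt (real a) + sqrt (real b) + sqrt (real c) = sqrt (real d)"
  shows "is_nth_power 2 (a*b)"
proof -
  define x where "x = sqrt (real a)"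
  define y where "y = sqrt (real b)"
  define u where "u = sqrt (real c)"
  define w where "w = sqrt (real d)"
  have x2: "x^2 = real a" and y2: "y^2 = real b" and u2: "u^2 = real c" and w2: "w^2 = real d"
    by (simp_all add: x_def y_def u_def w_def)
  have xp: "x > 0" "y > 0" "u > 0" "w > 0" using pos by (simp_all add: x_def y_def u_def w_def)
  have e: "w - u = x + y" using eq by (simp add: x_def y_def u_def w_def)
  define A where "A = real d + real c - real a - real b"
  have "(w - u)^2 = (x+y)^2" using e by simp
  then have "w^2 - 2*u*w + u^2 = x^2 + 2*x*y + y^2" by (simp add: power2_eq_square algebra_simps)
  then have hA: "2*x*y + 2*u*w = A" using x2 y2 u2 w2 unfolding A_def by linarith
  have Apos: "A > 0" using hA xp by (smt (verit) mult_pos_pos)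
  have "2*u*w = A - 2*x*y" using hA by linarith
  then have "(2*u*w)^2 = (A - 2*x*y)^2" by simp
  then have "4 * (u^2 * w^2) = A^2 - 4*A*(x*y) + 4*(x^2*y^2)"
    by (simp add: power2_eq_square algebra_simps)
  then have "4*A*(x*y) = A^2 + 4*real a*real b - 4*real c*real d" using x2 y2 u2 w2 by simp
  then have "(4*A)^2 * (x*y)^2 = (A^2 + 4*real a*real b - 4*real c*real d)^2"
    by (metis power_mult_distrib mult.assoc)
  then have R: "real (a*b) * (4*A)^2 = (A^2 + 4*real a*real b - 4*real c*real d)^2"
    using x2 y2 by (simp add: power_mult_distrib algebra_simps)
  define Ai :: int where "Ai = int d + int c - int a - int b"
  define Xi :: int where "Xi = Ai^2 + 4*int a*int b - 4*int c*int d"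
  have AA: "A = real_of_int Ai" unfolding A_def Ai_def by simp
  have "real_of_int (int (a*b) * (4*Ai)^2) = real_of_int (Xi^2)"
    using R unfolding AA Xi_def by simp
  then have I: "int (a*b) * (4*Ai)^2 = Xi^2" by (simp only: of_int_eq_iff)
  have Aip: "Ai > 0" using Apos AA by simp
  have "int (a*b * (nat (4*Ai))^2) = int ((nat \<bar>Xi\<bar>)^2)"
    using I Aip by simp
  then have N: "a*b * (nat (4*Ai))^2 = (nat \<bar>Xi\<bar>)^2" by (simp only: of_nat_eq_iff)
  have "is_nth_power 2 (a*b * (nat (4*Ai))^2)" unfolding N by auto
  then show ?thesis using Aip by (subst (asm) is_nth_power_mult_cancel_right) auto
qed

lemma sqf_eq:
  fixes a b :: nat
  assumes "a > 0" "b > 0" "is_nth_power 2 (a*b)"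
  shows "squarefree_part a = squarefree_part b"
proof -
  have "normalize (squarefree_part a) = normalize (squarefree_part b)"
  proof (rule multiplicity_eq_imp_eq)
    fix p :: nat assume p: "prime p"
    have "2 dvd multiplicity p (a*b)" using assms(3) p is_nth_power_conv_multiplicity_nat[of 2 "a*b"] by auto
    also have "multiplicity p (a*b) = multiplicity p a + multiplicity p b"
      using p assms by (intro prime_elem_multiplicity_mult_distrib) auto
    finally have "multiplicity p a mod 2 = multiplicity p b mod 2" by presburger
    then show "multiplicity p (squarefree_part a) = multiplicity p (squarefree_part b)"
      using p by (simp add: prime_multiplicity_squarefree_part)
  qed auto
  then show ?thesis by simp
qed




definition Dc :: real where "Dc = 6^64"

lemma Dc_pos: "Dc > 0" unfolding Dc_def by simp
lemma Dc_nonneg [simp]: "Dc \<ge> 0" using Dc_pos by simp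

lemma ndiv_bound': "n > 0 \<Longrightarrow> real (ndiv n) \<le> Dc * real n powr (1/6)"
  unfolding Dc_def by (rule ndiv_bound)

lemma L1: assumes "n > 0"
  shows "real (ndiv n) / real n powr (3/4) \<le> Dc * real n powr (-7/12)"
proof -
  have np: "real n powr (3/4) > 0" using assms by simp
  have "real (ndiv n) / real n powr (3/4) \<le> (Dc * real n powr (1/6)) / real n powr (3/4)"
    using ndiv_bound'[OF assms] np by (intro divide_right_mono) auto
  also have "\<dots> = Dc * (real n powr (1/6) / real n powr (3/4))" by (simp only: times_divide_eq_right)
  also have "real n powr (1/6) / real n powr (3/4) = real n powr (-7/12)"
    using powr_diff[of "real n" "1/6" "3/4"] by simp
  finally show ?thesis .
qed

lemma L2: assumes "n > 0"
  shows "real (ndiv n) / real n powr (1/4) \<le> Dc"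
proof -
  have np: "real n powr (1/4) > 0" using assms by simp
  have "real n powr (1/6) \<le> real n powr (1/4)" using assms by (intro powr_mono) auto
  then have "real (ndiv n) \<le> Dc * real n powr (1/4)"
  proof -
    have "Dc * real n powr (1/6) \<le> Dc * real n powr (1/4)"
      using \<open>real n powr (1/6) \<le> real n powr (1/4)\<close> by (intro mult_left_mono) auto
    then show ?thesis using ndiv_bound'[OF assms] by linarith
  qed
  then show ?thesis using np by (simp add: divide_le_eq)
qed

lemma L3: assumes "q > 0" "m > 0"
  shows "real (q * m^2) powr (-7/12) = real q powr (-7/12) * real m powr (-7/6)"
proof -
  have "real (q * m^2) powr (-7/12) = real q powr (-7/12) * (real m ^ 2) powr (-7/12)"
    by (simp add: powr_mult)
  also have "(real m ^ 2) powr (-7/12) = real m powr (-7/6)"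
  proof -
    have e: "real m ^ 2 = real m powr 2" using assms by (simp add: powr_realpow)
    have "(real m ^ 2) powr (-7/12) = (real m powr 2) powr (-7/12)" by (simp only: e)
    also have "\<dots> = real m powr (2 * (-7/12))" by (rule powr_powr)
    finally show ?thesis by simp
  qed
  finally show ?thesis .
qed

lemma sum_box:
  fixes f1 f2 :: "nat \<Rightarrow> real" and K :: real
  shows "(\<Sum>(q,m1,m2,m3)\<in>A \<times> A \<times> A \<times> A. K * (f1 q * (f2 m1 * (f2 m2 * f2 m3))))
    = K * (sum f1 A * (sum f2 A * (sum f2 A * sum f2 A)))"
proof -
  have h1: "sum f2 A * sum f2 A = (\<Sum>m2\<in>A. \<Sum>m3\<in>A. f2 m2 * f2 m3)" by (rule sum_product)
  have h2: "sum f2 A * (sum f2 A * sum f2 A) = (\<Sum>m1\<in>A. \<Sum>m2\<in>A. \<Sum>m3\<in>A. f2 m1 * (f2 m2 * f2 m3))"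
    unfolding h1 sum_product by (simp add: sum_distrib_left)
  have h3: "sum f1 A * (sum f2 A * (sum f2 A * sum f2 A)) = (\<Sum>q\<in>A. \<Sum>m1\<in>A. \<Sum>m2\<in>A. \<Sum>m3\<in>A. f1 q * (f2 m1 * (f2 m2 * f2 m3)))"
    unfolding h2 sum_product by (simp add: sum_distrib_left)
  have h4: "(\<Sum>(q,m1,m2,m3)\<in>A \<times> A \<times> A \<times> A. K * (f1 q * (f2 m1 * (f2 m2 * f2 m3))))
     = (\<Sum>q\<in>A. \<Sum>m1\<in>A. \<Sum>m2\<in>A. \<Sum>m3\<in>A. K * (f1 q * (f2 m1 * (f2 m2 * f2 m3))))"
    by (simp only: sum.cartesian_product[symmetric] split_conv)
  show ?thesis unfolding h4 h3 by (simp add: sum_distrib_left)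
qed




lemma point:
  fixes n1 n2 n3 n4 :: nat
  assumes pos: "n1 \<ge> 1" "n2 \<ge> 1" "n3 \<ge> 1" "n4 \<ge> 1"
    and eq: "sqrt (real n1) + sqrt (real n2) + sqrt (real n3) = sqrt (real n4)"
  shows "squarefree_part n2 = squarefree_part n1" "squarefree_part n3 = squarefree_part n1"
    "real (ndiv n1 * ndiv n2 * ndiv n3 * ndiv n4) / ((real (n1*n2*n3)) powr (3/4) * (real n4) powr (1/4))
     \<le> Dc^4 * (real (squarefree_part n1) powr (-7/4) * (real (square_part n1) powr (-7/6) *
         (real (square_part n2) powr (-7/6) * real (square_part n3) powr (-7/6))))"
proof -
  define q where "q = squarefree_part n1"
  have "is_nth_power 2 (n1*n2)" using pos eq by (intro sqrt_sum_square[of n1 n2 n3 n4]) auto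
  then have e2: "squarefree_part n2 = q" unfolding q_def using pos by (intro sqf_eq[symmetric]) auto
  have eq': "sqrt (real n1) + sqrt (real n3) + sqrt (real n2) = sqrt (real n4)" using eq by linarith
  have "is_nth_power 2 (n1*n3)" using pos eq' by (intro sqrt_sum_square[of n1 n3 n2 n4]) auto
  then have e3: "squarefree_part n3 = q" unfolding q_def using pos by (intro sqf_eq[symmetric]) auto
  show "squarefree_part n2 = squarefree_part n1" "squarefree_part n3 = squarefree_part n1"
    using e2 e3 q_def by auto
  define m1 where "m1 = square_part n1"
  define m2 where "m2 = square_part n2"
  define m3 where "m3 = square_part n3"
  have d1: "n1 = q * m1^2" unfolding q_def m1_def by (rule squarefree_decompose)
  have d2: "n2 = q * m2^2" unfolding m2_def using squarefree_decompose[of n2] e2 by simp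
  have d3: "n3 = q * m3^2" unfolding m3_def using squarefree_decompose[of n3] e3 by simp
  have qn: "squarefree_part n1 \<noteq> 0" by (rule squarefree_part_nonzero)
  have qp: "q > 0" unfolding q_def using qn by (simp add: zero_less_iff_neq_zero)
  have mp: "m1 > 0" "m2 > 0" "m3 > 0" using d1 d2 d3 pos by (auto intro!: Nat.gr0I)
  have split: "real (ndiv n1 * ndiv n2 * ndiv n3 * ndiv n4) / ((real (n1*n2*n3)) powr (3/4) * (real n4) powr (1/4))
    = (real (ndiv n1) / real n1 powr (3/4)) * (real (ndiv n2) / real n2 powr (3/4)) *
      (real (ndiv n3) / real n3 powr (3/4)) * (real (ndiv n4) / real n4 powr (1/4))"
    by (simp add: powr_mult)
  have b1: "real (ndiv n1) / real n1 powr (3/4) \<le> Dc * real n1 powr (-7/12)" using pos by (intro L1) auto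
  have b2: "real (ndiv n2) / real n2 powr (3/4) \<le> Dc * real n2 powr (-7/12)" using pos by (intro L1) auto
  have b3: "real (ndiv n3) / real n3 powr (3/4) \<le> Dc * real n3 powr (-7/12)" using pos by (intro L1) auto
  have b4: "real (ndiv n4) / real n4 powr (1/4) \<le> Dc" using pos by (intro L2) auto
  have "(real (ndiv n1) / real n1 powr (3/4)) * (real (ndiv n2) / real n2 powr (3/4)) *
      (real (ndiv n3) / real n3 powr (3/4)) * (real (ndiv n4) / real n4 powr (1/4))
      \<le> (Dc * real n1 powr (-7/12)) * (Dc * real n2 powr (-7/12)) * (Dc * real n3 powr (-7/12)) * Dc"
    by (intro mult_mono b1 b2 b3 b4) auto
  also have "\<dots> = Dc^4 * (real q powr (-7/12) * real q powr (-7/12) * real q powr (-7/12)) *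
      (real m1 powr (-7/6) * (real m2 powr (-7/6) * real m3 powr (-7/6)))"
  proof -
    have r1: "real n1 powr (-7/12) = real q powr (-7/12) * real m1 powr (-7/6)" unfolding d1 using qp mp by (intro L3) auto
    have r2: "real n2 powr (-7/12) = real q powr (-7/12) * real m2 powr (-7/6)" unfolding d2 using qp mp by (intro L3) auto
    have r3: "real n3 powr (-7/12) = real q powr (-7/12) * real m3 powr (-7/6)" unfolding d3 using qp mp by (intro L3) auto
    show ?thesis by (simp only: r1 r2 r3) (simp add: power4_eq_xxxx mult_ac)
  qed
  also have "real q powr (-7/12) * real q powr (-7/12) * real q powr (-7/12) = real q powr (-7/4)"
    by (simp flip: powr_add)
  finally show "real (ndiv n1 * ndiv n2 * ndiv n3 * ndiv n4) / ((real (n1*n2*n3)) powr (3/4) * (real n4) powr (1/4))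
     \<le> Dc^4 * (real (squarefree_part n1) powr (-7/4) * (real (square_part n1) powr (-7/6) *
         (real (square_part n2) powr (-7/6) * real (square_part n3) powr (-7/6))))"
    unfolding split q_def m1_def m2_def m3_def by (simp add: mult_ac)
qed




lemma sqp_bound: "n \<ge> 1 \<Longrightarrow> square_part n \<ge> 1 \<and> square_part n \<le> (n::nat)"
proof -
  assume n: "n \<ge> 1"
  have nz: "square_part n \<noteq> 0" using n by simp
  have a: "square_part n \<le> square_part n ^ 2" using nz by (simp add: power2_eq_square)
  have b: "square_part n ^ 2 \<le> n" using n by (intro dvd_imp_le[OF square_part_square_dvd]) simp
  have "0 < square_part n" using nz unfolding neq0_conv .
  then show ?thesis using a b by linarith
qed

lemma sqf_bound: "n \<ge> 1 \<Longrightarrow> squarefree_part n \<ge> 1 \<and> squarefree_part n \<le> (n::nat)"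
proof -
  assume n: "n \<ge> 1"
  have d: "squarefree_part n * square_part n ^ 2 = n" by (rule squarefree_decompose[symmetric])
  have "squarefree_part n dvd n" using dvd_triv_left[of "squarefree_part n" "square_part n ^ 2"] unfolding d .
  then have "squarefree_part n \<le> n" using n by (intro dvd_imp_le) simp_all
  moreover have "squarefree_part n \<noteq> 0" by (rule squarefree_part_nonzero)
  then have "0 < squarefree_part n" unfolding neq0_conv .
  ultimately show ?thesis by linarith
qed

theorem lemma4p2:
  shows "\<exists>C>0. \<forall>z::real. z \<ge> 10 \<longrightarrow> \<bar>c1 z\<bar> \<le> C"
proof -
  define f1 :: "nat \<Rightarrow> real" where "f1 q = real q powr (-7/4)" for q
  define f2 :: "nat \<Rightarrow> real" where "f2 m = real m powr (-7/6)" for m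
  have s1: "summable f1" unfolding f1_def by (subst summable_real_powr_iff) simp
  have s2: "summable f2" unfolding f2_def by (subst summable_real_powr_iff) simp
  have f1n: "\<And>q. f1 q \<ge> 0" and f2n: "\<And>q. f2 q \<ge> 0" unfolding f1_def f2_def by auto
  define Z1 where "Z1 = suminf f1"
  define Z2 where "Z2 = suminf f2"
  have Z1n: "Z1 \<ge> 0" unfolding Z1_def using s1 f1n by (intro suminf_nonneg) auto
  have Z2n: "Z2 \<ge> 0" unfolding Z2_def using s2 f2n by (intro suminf_nonneg) auto
  have P1: "\<And>I. finite I \<Longrightarrow> sum f1 I \<le> Z1" unfolding Z1_def using s1 f1n by (intro sum_le_suminf) auto
  have P2: "\<And>I. finite I \<Longrightarrow> sum f2 I \<le> Z2" unfolding Z2_def using s2 f2n by (intro sum_le_suminf) auto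
  define C where "C = Dc^4 * (Z1 * (Z2 * (Z2 * Z2))) + 1"
  have Cpos: "C > 0" unfolding C_def using Z1n Z2n by (simp add: add_nonneg_pos)
  show ?thesis
  proof (intro exI[of _ C] conjI allI impI Cpos)
    fix z :: real assume "z \<ge> 10"
    define N where "N = nat \<lfloor>z\<rfloor>"
    define S where "S = {(n1, n2, n3, n4). n1 \<in> {1..N} \<and> n2 \<in> {1..N} \<and>
          n3 \<in> {1..N} \<and> n4 \<in> {1..N} \<and>
          sqrt (real n1) + sqrt (real n2) + sqrt (real n3) = sqrt (real n4)}"
    define w where "w = (\<lambda>(n1::nat, n2::nat, n3::nat, n4::nat). real (ndiv n1 * ndiv n2 * ndiv n3 * ndiv n4) /
        ((real (n1 * n2 * n3)) powr (3/4) * (real n4) powr (1/4)))"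
    have c1z: "c1 z = sum w S" unfolding c1_def S_def w_def N_def by (rule refl)
    define g where "g = (\<lambda>(n1::nat, n2::nat, n3::nat, n4::nat).
       (squarefree_part n1, square_part n1, square_part n2, square_part n3))"
    define F where "F = (\<lambda>(q,m1,m2,m3). Dc^4 * (f1 q * (f2 m1 * (f2 m2 * f2 m3))))"
    define B where "B = {1..N} \<times> {1..N} \<times> {1..N} \<times> {1..N}"
    have key: "0 \<le> w x \<and> w x \<le> F (g x) \<and> g x \<in> B" if x: "x \<in> S" for x
    proof -
      obtain n1 n2 n3 n4 where xe: "x = (n1,n2,n3,n4)" by (cases x) auto
      have h: "n1 \<in> {1..N}" "n2 \<in> {1..N}" "n3 \<in> {1..N}" "n4 \<in> {1..N}"
        "sqrt (real n1) + sqrt (real n2) + sqrt (real n3) = sqrt (real n4)"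
        using x unfolding xe S_def by auto
      have pos: "n1 \<ge> 1" "n2 \<ge> 1" "n3 \<ge> 1" "n4 \<ge> 1" using h by auto
      note pt = point[OF pos h(5)]
      have "0 \<le> w x" unfolding xe w_def split_conv by (intro divide_nonneg_nonneg mult_nonneg_nonneg) simp_all
      moreover have "w x \<le> F (g x)" unfolding xe w_def g_def F_def f1_def f2_def split_conv by (rule pt(3))
      moreover have "g x \<in> B" unfolding xe g_def B_def
        using h sqp_bound[of n1] sqp_bound[of n2] sqp_bound[of n3] sqf_bound[of n1] pos by auto
      ultimately show ?thesis by blast
    qed
    have inj: "inj_on g S"
    proof (rule inj_onI)
      fix x y assume x: "x \<in> S" and y: "y \<in> S" and gxy: "g x = g y"
      obtain n1 n2 n3 n4 where xe: "x = (n1,n2,n3,n4)" by (cases x) auto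
      obtain k1 k2 k3 k4 where ye: "y = (k1,k2,k3,k4)" by (cases y) auto
      have h: "n1 \<in> {1..N}" "n2 \<in> {1..N}" "n3 \<in> {1..N}" "n4 \<in> {1..N}"
        "sqrt (real n1) + sqrt (real n2) + sqrt (real n3) = sqrt (real n4)"
        using x unfolding xe S_def by auto
      have hk: "k1 \<in> {1..N}" "k2 \<in> {1..N}" "k3 \<in> {1..N}" "k4 \<in> {1..N}"
        "sqrt (real k1) + sqrt (real k2) + sqrt (real k3) = sqrt (real k4)"
        using y unfolding ye S_def by auto
      have pt: "squarefree_part n2 = squarefree_part n1" "squarefree_part n3 = squarefree_part n1"
        using point[of n1 n2 n3 n4] h by auto
      have pk: "squarefree_part k2 = squarefree_part k1" "squarefree_part k3 = squarefree_part k1"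
        using point[of k1 k2 k3 k4] hk by auto
      have g: "squarefree_part n1 = squarefree_part k1" "square_part n1 = square_part k1"
         "square_part n2 = square_part k2" "square_part n3 = square_part k3"
        using gxy unfolding xe ye g_def by auto
      have 1: "n1 = k1" by (rule squarefree_decomposition_unique[OF g(2) g(1)])
      have "squarefree_part n2 = squarefree_part k2" by (rule trans[OF pt(1) trans[OF g(1) pk(1)[symmetric]]])
      then have 2: "n2 = k2" by (rule squarefree_decomposition_unique[OF g(3)])
      have "squarefree_part n3 = squarefree_part k3" by (rule trans[OF pt(2) trans[OF g(1) pk(2)[symmetric]]])
      then have 3: "n3 = k3" by (rule squarefree_decomposition_unique[OF g(4)])
      from h(5) have "sqrt (real k1) + sqrt (real k2) + sqrt (real k3) = sqrt (real n4)" unfolding 1 2 3 .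
      then have "sqrt (real n4) = sqrt (real k4)" using hk(5) by linarith
      then have 4: "n4 = k4" by simp
      show "x = y" unfolding xe ye using 1 2 3 4 by simp
    qed
    have nn: "0 \<le> sum w S" by (rule sum_nonneg) (use key in auto)
    have "sum w S \<le> sum (F \<circ> g) S" by (rule sum_mono) (use key in auto)
    also have "\<dots> = sum F (g ` S)" by (rule sum.reindex[symmetric, OF inj])
    also have "\<dots> \<le> sum F B"
    proof (rule sum_mono2)
      show "finite B" unfolding B_def by auto
      show "g ` S \<subseteq> B" using key by auto
      show "0 \<le> F b" for b unfolding F_def using f1n f2n by (auto simp: case_prod_beta)
    qed
    also have "sum F B = Dc^4 * (sum f1 {1..N} * (sum f2 {1..N} * (sum f2 {1..N} * sum f2 {1..N})))"
      unfolding F_def B_def by (rule sum_box[of "Dc^4" f1 f2 "{1..N}"])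
    also have "\<dots> \<le> Dc^4 * (Z1 * (Z2 * (Z2 * Z2)))"
      using P1[of "{1..N}"] P2[of "{1..N}"] f1n f2n Z1n Z2n
      by (intro mult_left_mono mult_mono sum_nonneg mult_nonneg_nonneg) auto
    finally have "sum w S \<le> Dc^4 * (Z1 * (Z2 * (Z2 * Z2)))" .
    then show "\<bar>c1 z\<bar> \<le> C" unfolding c1z C_def using nn by simp
  qed
qed


end
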